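(* Every metrizable space $X$ has a uniform Eberlein compactification, i.e. there is a uniform Eberlein compact space $K$ containing a dense subspace homeomorphic to $X$.
   Context: A compact space is uniform Eberlein if it is homeomorphic to a compact subset of a Hilbert space endowed with its weak topology. A compactification of a space $X$ is a compact Hausdorff space containing (a homeomorphic copy of) $X$ as a dense subspace. *)

theory Defs
  imports "HOL-Analysis.Analysis"
begin

text \<open>The Hilbert space l2(Gamma): real functions supported in Gamma with square-summable values.
  Every Hilbert space is isometrically isomorphic to some l2(Gamma).\<close>
definition l2 :: "'i set \<Rightarrow> ('i \<Rightarrow> real) set" where
  "l2 \<Gamma> = {f. (\<forall>i. i \<notin> \<Gamma> \<longrightarrow> f i = 0) \<and> (\<lambda>i. (f i)\<^sup>2) summable_on \<Gamma>}"

definition l2_inner :: "'i set \<Rightarrow> ('i \<Rightarrow> real) \<Rightarrow> ('i \<Rightarrow> real) \<Rightarrow> real" where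
  "l2_inner \<Gamma> f g = (\<Sum>\<^sub>\<infinity>i\<in>\<Gamma>. f i * g i)"

definition weak_l2 :: "'i set \<Rightarrow> ('i \<Rightarrow> real) topology" where
  "weak_l2 \<Gamma> = subtopology
     (topology_generated_by {{f. l2_inner \<Gamma> f g \<in> U} | g U. g \<in> l2 \<Gamma> \<and> open U})
     (l2 \<Gamma>)"

text \<open>Gamma ranges over subsets of the carrier type of K, which suffices since
  weight(K) is at most |K| for compact Hausdorff K.\<close>
definition uniform_eberlein :: "'b topology \<Rightarrow> bool" where
  "uniform_eberlein K \<longleftrightarrow> compact_space K \<and>
     (\<exists>(\<Gamma>::'b set) C. C \<subseteq> l2 \<Gamma> \<and> compactin (weak_l2 \<Gamma>) C \<and>
        K homeomorphic_space subtopology (weak_l2 \<Gamma>) C)"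

end

theory Submission
  imports Defs
begin


definition Bal :: "'i set \<Rightarrow> ('i \<Rightarrow> real) set" where
  "Bal \<Gamma> = {f. (\<forall>i. i \<notin> \<Gamma> \<longrightarrow> f i = 0) \<and> (\<forall>F. finite F \<and> F \<subseteq> \<Gamma> \<longrightarrow> (\<Sum>i\<in>F. (f i)\<^sup>2) \<le> 1)}"

lemma sq_summable_Bal:
  assumes "f \<in> Bal \<Gamma>" "A \<subseteq> \<Gamma>"
  shows "(\<lambda>i. (f i)\<^sup>2) summable_on A" "(\<Sum>\<^sub>\<infinity>i\<in>A. (f i)\<^sup>2) \<le> 1"
proof -
  have fs: "\<And>F. finite F \<Longrightarrow> F \<subseteq> A \<Longrightarrow> (\<Sum>i\<in>F. (f i)\<^sup>2) \<le> 1"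
    using assms unfolding Bal_def by blast
  show "(\<lambda>i. (f i)\<^sup>2) summable_on A"
    by (rule nonneg_bdd_above_summable_on) (use fs in \<open>auto intro!: bdd_aboveI[where M=1]\<close>)
  then show "(\<Sum>\<^sub>\<infinity>i\<in>A. (f i)\<^sup>2) \<le> 1"
    using fs by (rule infsum_le_finite_sums)
qed

lemma Bal_l2: "f \<in> Bal \<Gamma> \<Longrightarrow> f \<in> l2 \<Gamma>"
  using sq_summable_Bal[of f \<Gamma> \<Gamma>] unfolding l2_def Bal_def by auto

lemma amgm_aux: fixes a b e :: real assumes "e > 0"
  shows "\<bar>a * b\<bar> \<le> (e * a\<^sup>2 + b\<^sup>2 / e) / 2"
proof -
  have "0 \<le> (e * \<bar>a\<bar> - \<bar>b\<bar>)\<^sup>2" by simp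
  hence "2 * e * \<bar>a * b\<bar> \<le> e\<^sup>2 * a\<^sup>2 + b\<^sup>2"
    by (simp add: power2_eq_square algebra_simps abs_mult)
  hence "\<bar>a * b\<bar> \<le> (e\<^sup>2 * a\<^sup>2 + b\<^sup>2) / (2 * e)"
    using assms by (simp add: field_simps)
  also have "\<dots> = (e * a\<^sup>2 + b\<^sup>2 / e) / 2"
    using assms by (simp add: field_simps power2_eq_square)
  finally show ?thesis .
qed

lemma prod_summable:
  fixes f g :: "'i \<Rightarrow> real"
  assumes "(\<lambda>i. (f i)\<^sup>2) summable_on A" "(\<lambda>i. (g i)\<^sup>2) summable_on A"
  shows "(\<lambda>i. norm (f i * g i)) summable_on A"
proof (rule summable_on_comparison_test)
  show "(\<lambda>i. ((f i)\<^sup>2 + (g i)\<^sup>2) / 2) summable_on A"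
    using summable_on_cmult_left[OF summable_on_add[OF assms], of "1/2"] by simp
  show "norm (f x * g x) \<le> ((f x)\<^sup>2 + (g x)\<^sup>2) / 2" for x
    using amgm_aux[of 1 "f x" "g x"] by simp
qed auto

lemma tail_bound:
  fixes f g :: "'i \<Rightarrow> real"
  assumes "(\<lambda>i. (f i)\<^sup>2) summable_on A" "(\<Sum>\<^sub>\<infinity>i\<in>A. (f i)\<^sup>2) \<le> 1"
    "(\<lambda>i. (g i)\<^sup>2) summable_on A" "(\<Sum>\<^sub>\<infinity>i\<in>A. (g i)\<^sup>2) \<le> T" "e > 0"
  shows "\<bar>\<Sum>\<^sub>\<infinity>i\<in>A. f i * g i\<bar> \<le> (e + T / e) / 2"
proof -
  have ab: "(\<lambda>i. norm (f i * g i)) summable_on A" using prod_summable assms by blast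
  have s1: "(\<lambda>i. (e/2) * (f i)\<^sup>2) summable_on A" "(\<lambda>i. (1/(2*e)) * (g i)\<^sup>2) summable_on A"
    by (rule summable_on_cmult_right[OF assms(1)], rule summable_on_cmult_right[OF assms(3)])
  have s2: "(\<lambda>i. (e/2) * (f i)\<^sup>2 + (1/(2*e)) * (g i)\<^sup>2) summable_on A"
    by (rule summable_on_add[OF s1])
  have "\<bar>\<Sum>\<^sub>\<infinity>i\<in>A. f i * g i\<bar> \<le> (\<Sum>\<^sub>\<infinity>i\<in>A. norm (f i * g i))"
    using norm_infsum_bound[OF ab] by simp
  also have "\<dots> \<le> (\<Sum>\<^sub>\<infinity>i\<in>A. (e/2) * (f i)\<^sup>2 + (1/(2*e)) * (g i)\<^sup>2)"
  proof (rule infsum_mono[OF ab s2])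
    fix i show "norm (f i * g i) \<le> (e/2) * (f i)\<^sup>2 + (1/(2*e)) * (g i)\<^sup>2"
      using amgm_aux[OF assms(5), of "f i" "g i"] by (simp add: field_simps)
  qed
  also have "\<dots> = (e/2) * (\<Sum>\<^sub>\<infinity>i\<in>A. (f i)\<^sup>2) + (1/(2*e)) * (\<Sum>\<^sub>\<infinity>i\<in>A. (g i)\<^sup>2)"
    unfolding infsum_add[OF s1] infsum_cmult_right[OF assms(1)] infsum_cmult_right[OF assms(3)] ..
  also have "\<dots> = (e * (\<Sum>\<^sub>\<infinity>i\<in>A. (f i)\<^sup>2) + (\<Sum>\<^sub>\<infinity>i\<in>A. (g i)\<^sup>2) / e) / 2"
    by (simp add: field_simps)
  also have "\<dots> \<le> (e + T / e) / 2"
    using assms by (intro divide_right_mono add_mono mult_left_le divide_right_mono) auto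
  finally show ?thesis .
qed

abbreviation PT :: "('i \<Rightarrow> real) topology" where
  "PT \<equiv> product_topology (\<lambda>_. euclideanreal) UNIV"

lemma topspace_PT[simp]: "topspace PT = UNIV"
  by (simp add: PiE_UNIV_domain)

lemma split_inner:
  assumes "f \<in> Bal \<Gamma>" "g \<in> l2 \<Gamma>" "finite F" "F \<subseteq> \<Gamma>"
  shows "l2_inner \<Gamma> f g = (\<Sum>i\<in>F. f i * g i) + (\<Sum>\<^sub>\<infinity>i\<in>\<Gamma> - F. f i * g i)"
proof -
  have g2: "(\<lambda>i. (g i)\<^sup>2) summable_on \<Gamma>" using assms(2) unfolding l2_def by auto
  have "(\<lambda>i. norm (f i * g i)) summable_on (\<Gamma> - F)"
    by (rule prod_summable[OF sq_summable_Bal(1)[OF assms(1)] summable_on_subset_banach[OF g2]]) auto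
  hence s: "(\<lambda>i. f i * g i) summable_on (\<Gamma> - F)" by (rule abs_summable_summable)
  have "\<Gamma> = F \<union> (\<Gamma> - F)" using assms by auto
  hence "l2_inner \<Gamma> f g = (\<Sum>\<^sub>\<infinity>i\<in>F \<union> (\<Gamma> - F). f i * g i)" unfolding l2_inner_def by simp
  also have "\<dots> = (\<Sum>\<^sub>\<infinity>i\<in>F. f i * g i) + (\<Sum>\<^sub>\<infinity>i\<in>\<Gamma> - F. f i * g i)"
    by (rule infsum_Un_disjoint) (use s assms in auto)
  finally show ?thesis using assms by simp
qed

lemma small_tail:
  assumes "g \<in> l2 \<Gamma>" "e > 0"
  obtains F where "finite F" "F \<subseteq> \<Gamma>" "(\<Sum>\<^sub>\<infinity>i\<in>\<Gamma> - F. (g i)\<^sup>2) \<le> e"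
proof -
  have g2: "(\<lambda>i. (g i)\<^sup>2) summable_on \<Gamma>" using assms(1) unfolding l2_def by auto
  obtain F where F: "finite F" "F \<subseteq> \<Gamma>" "dist (\<Sum>i\<in>F. (g i)\<^sup>2) (\<Sum>\<^sub>\<infinity>i\<in>\<Gamma>. (g i)\<^sup>2) \<le> e"
    using infsum_finite_approximation[OF g2 assms(2)] by blast
  have "\<Gamma> = F \<union> (\<Gamma> - F)" using F by auto
  hence "(\<Sum>\<^sub>\<infinity>i\<in>\<Gamma>. (g i)\<^sup>2) = (\<Sum>\<^sub>\<infinity>i\<in>F \<union> (\<Gamma> - F). (g i)\<^sup>2)" by simp
  also have "\<dots> = (\<Sum>\<^sub>\<infinity>i\<in>F. (g i)\<^sup>2) + (\<Sum>\<^sub>\<infinity>i\<in>\<Gamma> - F. (g i)\<^sup>2)"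
    by (rule infsum_Un_disjoint) (use summable_on_subset_banach[OF g2] F in auto)
  finally have "(\<Sum>\<^sub>\<infinity>i\<in>\<Gamma> - F. (g i)\<^sup>2) = (\<Sum>\<^sub>\<infinity>i\<in>\<Gamma>. (g i)\<^sup>2) - (\<Sum>i\<in>F. (g i)\<^sup>2)"
    using F by simp
  with F(3) have "(\<Sum>\<^sub>\<infinity>i\<in>\<Gamma> - F. (g i)\<^sup>2) \<le> e" by (simp add: dist_real_def)
  with F show ?thesis using that by blast
qed

lemma tail_small:
  assumes "f \<in> Bal \<Gamma>" "g \<in> l2 \<Gamma>" "F \<subseteq> \<Gamma>" "(\<Sum>\<^sub>\<infinity>i\<in>\<Gamma> - F. (g i)\<^sup>2) \<le> e\<^sup>2" "e > 0"
  shows "\<bar>\<Sum>\<^sub>\<infinity>i\<in>\<Gamma> - F. f i * g i\<bar> \<le> e"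
proof -
  have g2: "(\<lambda>i. (g i)\<^sup>2) summable_on \<Gamma>" using assms(2) unfolding l2_def by auto
  have "\<bar>\<Sum>\<^sub>\<infinity>i\<in>\<Gamma> - F. f i * g i\<bar> \<le> (e + e\<^sup>2 / e) / 2"
    by (rule tail_bound[OF sq_summable_Bal[OF assms(1)] summable_on_subset_banach[OF g2] assms(4) assms(5)]) auto
  also have "\<dots> = e" using assms(5) by (simp add: power2_eq_square)
  finally show ?thesis .
qed

lemma continuous_inner_Bal:
  assumes "g \<in> l2 \<Gamma>"
  shows "continuous_map (subtopology PT (Bal \<Gamma>)) euclideanreal (\<lambda>f. l2_inner \<Gamma> f g)"
  unfolding Met_TC.continuous_map_to_metric[simplified]
proof (intro ballI allI impI)
  fix f0 and \<epsilon> :: real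
  assume f0: "f0 \<in> topspace (subtopology PT (Bal \<Gamma>))" and "\<epsilon> > 0"
  hence f0B: "f0 \<in> Bal \<Gamma>" by simp
  define e where "e = \<epsilon> / 4"
  have e: "e > 0" using \<open>\<epsilon> > 0\<close> by (simp add: e_def)
  obtain F where F: "finite F" "F \<subseteq> \<Gamma>" "(\<Sum>\<^sub>\<infinity>i\<in>\<Gamma> - F. (g i)\<^sup>2) \<le> e\<^sup>2"
    using small_tail[OF assms, of "e\<^sup>2"] e by auto
  define s where "s = (\<lambda>f::'a\<Rightarrow>real. \<Sum>i\<in>F. f i * g i)"
  have cs: "continuous_map (subtopology PT (Bal \<Gamma>)) euclideanreal s"
    unfolding s_def
    by (intro continuous_map_sum continuous_map_real_mult continuous_map_const[THEN iffD2]
        continuous_map_from_subtopology continuous_map_product_projection F) auto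
  then obtain U where U: "openin (subtopology PT (Bal \<Gamma>)) U" "f0 \<in> U"
      "\<forall>y\<in>U. dist (s f0) (s y) < e"
    using f0 e unfolding Met_TC.continuous_map_to_metric[simplified] by metis
  have "\<forall>y\<in>U. dist (l2_inner \<Gamma> f0 g) (l2_inner \<Gamma> y g) < \<epsilon>"
  proof
    fix y assume "y \<in> U"
    hence yB: "y \<in> Bal \<Gamma>" using openin_subset[OF U(1)] by auto
    have "\<bar>s f0 - s y\<bar> < e" using U(3) \<open>y \<in> U\<close> by (simp add: dist_real_def)
    moreover have "\<bar>\<Sum>\<^sub>\<infinity>i\<in>\<Gamma> - F. y i * g i\<bar> \<le> e" "\<bar>\<Sum>\<^sub>\<infinity>i\<in>\<Gamma> - F. f0 i * g i\<bar> \<le> e"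
      using tail_small[OF _ assms F(2) F(3) e] yB f0B by auto
    moreover have "l2_inner \<Gamma> y g = s y + (\<Sum>\<^sub>\<infinity>i\<in>\<Gamma> - F. y i * g i)"
      "l2_inner \<Gamma> f0 g = s f0 + (\<Sum>\<^sub>\<infinity>i\<in>\<Gamma> - F. f0 i * g i)"
      using split_inner[OF _ assms F(1,2)] yB f0B unfolding s_def by auto
    ultimately have "\<bar>l2_inner \<Gamma> f0 g - l2_inner \<Gamma> y g\<bar> < \<epsilon>"
      unfolding e_def by arith
    then show "dist (l2_inner \<Gamma> f0 g) (l2_inner \<Gamma> y g) < \<epsilon>"
      by (simp add: dist_real_def)
  qed
  with U show "\<exists>U. openin (subtopology PT (Bal \<Gamma>)) U \<and> f0 \<in> U \<and> (\<forall>y\<in>U. dist (l2_inner \<Gamma> f0 g) (l2_inner \<Gamma> y g) < \<epsilon>)"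
    by blast
qed


lemma zero_l2: "(\<lambda>_. 0) \<in> l2 \<Gamma>"
  unfolding l2_def by simp

lemma topspace_weak: "topspace (weak_l2 \<Gamma>) = l2 \<Gamma>"
proof -
  have "UNIV \<in> {{f. l2_inner \<Gamma> f g \<in> U} | g U. g \<in> l2 \<Gamma> \<and> open U}"
    using zero_l2[of \<Gamma>] by (auto intro!: exI[where x="\<lambda>_. 0"] exI[where x=UNIV])
  hence "\<Union>{{f. l2_inner \<Gamma> f g \<in> U} | g U. g \<in> l2 \<Gamma> \<and> open U} = UNIV" by blast
  thus ?thesis unfolding weak_l2_def by simp
qed

lemma weak_cont:
  assumes "g \<in> l2 \<Gamma>"
  shows "continuous_map (weak_l2 \<Gamma>) euclideanreal (\<lambda>f. l2_inner \<Gamma> f g)"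
  unfolding weak_l2_def
proof (rule continuous_map_from_subtopology)
  let ?S = "{{f. l2_inner \<Gamma> f g \<in> U} | g U. g \<in> l2 \<Gamma> \<and> open U}"
  show "continuous_map (topology_generated_by ?S) euclideanreal (\<lambda>f. l2_inner \<Gamma> f g)"
    unfolding continuous_map_alt
  proof (intro conjI allI impI)
    fix U :: "real set" assume "openin euclideanreal U"
    hence "{f. l2_inner \<Gamma> f g \<in> U} \<in> ?S" using assms by auto
    hence "openin (topology_generated_by ?S) {f. l2_inner \<Gamma> f g \<in> U}"
      by (rule topology_generated_by_Basis)
    hence "openin (topology_generated_by ?S) ({f. l2_inner \<Gamma> f g \<in> U} \<inter> topspace (topology_generated_by ?S))"
      by (intro openin_Int openin_topspace)
    thus "openin (topology_generated_by ?S) ((\<lambda>f. l2_inner \<Gamma> f g) -` U \<inter> topspace (topology_generated_by ?S))"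
      by (simp add: vimage_def)
  qed auto
qed

lemma top_eq_id:
  assumes "topspace X = topspace Y" "continuous_map X Y id" "continuous_map Y X id"
  shows "X = Y"
proof (rule topology_eq[THEN iffD2], intro allI iffI)
  fix U assume U: "openin X U"
  have "{x \<in> topspace Y. id x \<in> U} = U" using openin_subset[OF U] assms(1) by auto
  with openin_continuous_map_preimage[OF assms(3) U] show "openin Y U" by simp
next
  fix U assume U: "openin Y U"
  have "{x \<in> topspace X. id x \<in> U} = U" using openin_subset[OF U] assms(1) by auto
  with openin_continuous_map_preimage[OF assms(2) U] show "openin X U" by simp
qed

definition delta :: "'i \<Rightarrow> 'i \<Rightarrow> real" where "delta i = (\<lambda>j. if j = i then 1 else 0)"

lemma delta_l2: "i \<in> \<Gamma> \<Longrightarrow> delta i \<in> l2 \<Gamma>"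
  unfolding l2_def delta_def
  by (auto, subst summable_on_cong_neutral[where T="{i}" and g="\<lambda>j. (if j = i then 1 else 0)\<^sup>2"]) auto

lemma inner_delta: "i \<in> \<Gamma> \<Longrightarrow> l2_inner \<Gamma> f (delta i) = f i"
proof -
  assume i: "i \<in> \<Gamma>"
  have "l2_inner \<Gamma> f (delta i) = (\<Sum>\<^sub>\<infinity>j\<in>{i}. f j * delta i j)"
    unfolding l2_inner_def by (rule infsum_cong_neutral) (use i in \<open>auto simp: delta_def\<close>)
  thus ?thesis by (simp add: delta_def)
qed

lemma weak_eq_PT:
  assumes "S \<subseteq> Bal \<Gamma>"
  shows "subtopology (weak_l2 \<Gamma>) S = subtopology PT S"
proof (rule top_eq_id)
  have SL: "S \<subseteq> l2 \<Gamma>" using assms Bal_l2 by blast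
  show "topspace (subtopology (weak_l2 \<Gamma>) S) = topspace (subtopology PT S)"
    using SL by (auto simp: topspace_weak)
  show "continuous_map (subtopology (weak_l2 \<Gamma>) S) (subtopology PT S) id"
    unfolding continuous_map_in_subtopology
  proof
    show "continuous_map (subtopology (weak_l2 \<Gamma>) S) PT id"
      unfolding continuous_map_componentwise_UNIV
    proof
      fix i
      show "continuous_map (subtopology (weak_l2 \<Gamma>) S) euclideanreal (\<lambda>x. id x i)"
      proof (cases "i \<in> \<Gamma>")
        case True
        have "continuous_map (subtopology (weak_l2 \<Gamma>) S) euclideanreal (\<lambda>f. l2_inner \<Gamma> f (delta i))"
          by (rule continuous_map_from_subtopology[OF weak_cont[OF delta_l2[OF True]]])
        thus ?thesis by (rule continuous_map_eq) (simp add: inner_delta[OF True])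
      next
        case False
        have "continuous_map (subtopology (weak_l2 \<Gamma>) S) euclideanreal (\<lambda>f. 0)" by simp
        thus ?thesis by (rule continuous_map_eq) (use False assms in \<open>auto simp: Bal_def\<close>)
      qed
    qed
    show "id \<in> topspace (subtopology (weak_l2 \<Gamma>) S) \<rightarrow> S" by auto
  qed
  show "continuous_map (subtopology PT S) (subtopology (weak_l2 \<Gamma>) S) id"
    unfolding continuous_map_in_subtopology weak_l2_def
  proof (intro conjI)
    let ?S = "{{f. l2_inner \<Gamma> f g \<in> U} | g U. g \<in> l2 \<Gamma> \<and> open U}"
    show "continuous_map (subtopology PT S) (topology_generated_by ?S) id"
    proof (rule continuous_on_generated_topo)
      fix U assume "U \<in> ?S"
      then obtain g V where gV: "g \<in> l2 \<Gamma>" "open V" "U = {f. l2_inner \<Gamma> f g \<in> V}" by blast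
      have "continuous_map (subtopology PT S) euclideanreal (\<lambda>f. l2_inner \<Gamma> f g)"
        using continuous_map_from_subtopology[OF continuous_inner_Bal[OF gV(1)], of S] assms
        by (simp add: subtopology_subtopology Int_absorb1)
      from openin_continuous_map_preimage[OF this, of V] gV(2)
      show "openin (subtopology PT S) (id -` U \<inter> topspace (subtopology PT S))"
        by (simp add: gV(3) vimage_def Collect_conj_eq Int_commute)
    next
      show "id ` topspace (subtopology PT S) \<subseteq> \<Union> ?S"
        using zero_l2[of \<Gamma>] by (auto intro!: exI[where x="\<lambda>_. 0"] exI[where x=UNIV])
    qed
    show "id \<in> topspace (subtopology PT S) \<rightarrow> l2 \<Gamma>" using SL by auto
    show "id \<in> topspace (subtopology PT S) \<rightarrow> S" by auto
  qed
qed

lemma Bal_closed: "closedin PT (Bal (\<Gamma>::'i set))"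
proof -
  let ?C = "{{f::'i\<Rightarrow>real. f i \<in> {0}} | i. i \<notin> \<Gamma>} \<union> {{f. (\<Sum>i\<in>F. (f i)\<^sup>2) \<in> {..1}} | F. finite F \<and> F \<subseteq> \<Gamma>}"
  have "Bal \<Gamma> = \<Inter> ?C" unfolding Bal_def by auto
  moreover have "closedin PT (\<Inter> ?C)"
  proof (rule closedin_Inter)
    show "?C \<noteq> {}" by blast
    fix K assume "K \<in> ?C"
    then consider i where "K = {f. f i \<in> {0}}" | F where "finite F" "K = {f. (\<Sum>i\<in>F. (f i)\<^sup>2) \<in> {..1}}"
      by blast
    then show "closedin PT K"
    proof cases
      case 1
      have "closedin PT {f \<in> topspace PT. f i \<in> {0}}"
        by (rule closedin_continuous_map_preimage[OF continuous_map_product_projection]) auto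
      thus ?thesis using 1 by simp
    next
      case 2
      have "continuous_map PT euclideanreal (\<lambda>f. \<Sum>i\<in>F. (f i)\<^sup>2)"
        by (intro continuous_map_sum continuous_map_real_pow continuous_map_product_projection 2) auto
      from closedin_continuous_map_preimage[OF this, of "{..1}"]
      show ?thesis using 2 by simp
    qed
  qed
  ultimately show ?thesis by simp
qed

lemma Bal_compact: "compactin PT (Bal \<Gamma>)"
proof (rule closed_compactin[OF _ _ Bal_closed])
  show "compactin PT (PiE UNIV (\<lambda>_. {-1..1::real}))"
    by (simp add: compactin_PiE)
  show "Bal \<Gamma> \<subseteq> PiE UNIV (\<lambda>_. {-1..1::real})"
  proof
    fix f assume f: "f \<in> Bal \<Gamma>"
    have "\<bar>f i\<bar> \<le> 1" for i
    proof (cases "i \<in> \<Gamma>")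
      case True
      with f have "(\<Sum>j\<in>{i}. (f j)\<^sup>2) \<le> 1" unfolding Bal_def by blast
      hence "(f i)\<^sup>2 \<le> 1\<^sup>2" by simp
      thus ?thesis using abs_le_square_iff[of "f i" 1] by simp
    next
      case False thus ?thesis using f unfolding Bal_def by auto
    qed
    thus "f \<in> PiE UNIV (\<lambda>_. {-1..1::real})" by (auto simp: PiE_UNIV_domain abs_le_iff)
  qed
qed

lemma Hausdorff_PT: "Hausdorff_space PT"
  by (simp add: Hausdorff_space_product_topology)




lemma exists_sel:
  "\<exists>(r::'a rel) sel. antisym r \<and> (\<forall>S. S \<noteq> {} \<longrightarrow> sel S \<in> S \<and> (\<forall>t\<in>S. (sel S, t) \<in> r))"
proof -
  obtain r :: "'a rel" where r: "Well_order r" "Field r = UNIV" using well_ordering[where 'a='a] by metis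
  have wo: "well_order_on UNIV r" using r by simp
  have lin: "linear_order_on UNIV r" and wf: "wf (r - Id)"
    using wo unfolding well_order_on_def by blast+
  have po: "partial_order_on UNIV r" and tot: "total_on UNIV r"
    using lin unfolding linear_order_on_def by blast+
  have refl: "refl_on UNIV r" and anti: "antisym r"
    using po unfolding partial_order_on_def preorder_on_def by blast+
  have ex: "\<exists>z\<in>S. \<forall>t\<in>S. (z, t) \<in> r" if "S \<noteq> {}" for S
  proof -
    from \<open>S \<noteq> {}\<close> obtain x where "x \<in> S" by blast
    obtain z where z: "z \<in> S" "\<And>y. (y, z) \<in> r - Id \<Longrightarrow> y \<notin> S"
      using wfE_min[OF wf \<open>x \<in> S\<close>] by blast
    have "(z, t) \<in> r" if "t \<in> S" for t
    proof (cases "t = z")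
      case True
      then show ?thesis using refl unfolding refl_on_def by blast
    next
      case False
      then have "(t, z) \<in> r \<or> (z, t) \<in> r"
        using tot unfolding total_on_def by blast
      then show ?thesis using z that False by blast
    qed
    with z show ?thesis by blast
  qed
  then have "\<forall>S. \<exists>z. S \<noteq> {} \<longrightarrow> z \<in> S \<and> (\<forall>t\<in>S. (z, t) \<in> r)" by blast
  then obtain sel where "\<forall>S. S \<noteq> {} \<longrightarrow> sel S \<in> S \<and> (\<forall>t\<in>S. (sel S, t) \<in> r)"
    by (rule choice[THEN exE]) 
  with anti show ?thesis by blast
qed

lemma (in Metric_space) rudin:
  obtains A D :: "nat \<Rightarrow> nat \<Rightarrow> 'a \<Rightarrow> 'a set" where
    "\<And>m n s. openin mtopology (D m n s)"
    "\<And>m n s. A m n s \<subseteq> D m n s"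
    "\<And>m n s. mtopology closure_of (A m n s) \<subseteq> D m n s"
    "\<And>m n s t y. y \<in> D m n s \<Longrightarrow> y \<in> D m n t \<Longrightarrow> s = t"
    "\<And>m n s. D m n s \<subseteq> mball s ((1/2)^m)"
    "\<And>m y. y \<in> M \<Longrightarrow> \<exists>n s. y \<in> A m n s"
proof -
  obtain r :: "'a rel" and sel where r: "antisym r"
    and sel: "\<And>S. S \<noteq> {} \<Longrightarrow> sel S \<in> S \<and> (\<forall>t\<in>S. (sel S, t) \<in> r)"
    using exists_sel[where 'a='a] by blast
  define \<rho> :: "nat \<Rightarrow> real" where "\<rho> m = (1/2)^m" for m
  have \<rho>pos: "\<rho> m > 0" for m by (simp add: \<rho>_def)
  define Sx where "Sx m x = {t \<in> M. d t x < \<rho> m}" for m x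
  define idx where "idx m x = sel (Sx m x)" for m x
  have Sx_ne: "x \<in> M \<Longrightarrow> x \<in> Sx m x" for m x using \<rho>pos by (simp add: Sx_def)
  have idx: "x \<in> M \<Longrightarrow> idx m x \<in> Sx m x \<and> (\<forall>t\<in>Sx m x. (idx m x, t) \<in> r)" for m x
    unfolding idx_def using sel Sx_ne by blast
  define A where "A m n s = {x \<in> M. idx m x = s \<and> mball x (3 * (1/2)^n) \<subseteq> mball s (\<rho> m)}" for m n s
  define D where "D m n s = (\<Union>x\<in>A m n s. mball x ((1/2)^n))" for m n s
  show thesis
  proof
    show "openin mtopology (D m n s)" for m n s
      unfolding D_def by (intro openin_Union) auto
    show AD: "A m n s \<subseteq> D m n s" for m n s
      unfolding D_def by (auto simp: A_def intro!: bexI)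
    show "mtopology closure_of (A m n s) \<subseteq> D m n s" for m n s
    proof
      fix z assume "z \<in> mtopology closure_of (A m n s)"
      then have "z \<in> M" "\<exists>y\<in>A m n s. y \<in> mball z ((1/2)^n)"
        unfolding metric_closure_of by auto
      then obtain y where "y \<in> A m n s" "y \<in> mball z ((1/2)^n)" by blast
      then show "z \<in> D m n s" unfolding D_def using commute by auto
    qed
    have DB: "D m n s \<subseteq> mball s (\<rho> m)" for m n s
    proof
      fix z assume "z \<in> D m n s"
      then obtain x where x: "x \<in> A m n s" "z \<in> mball x ((1/2)^n)" unfolding D_def by blast
      then have "z \<in> mball x (3 * (1/2)^n)"
        using mball_subset_concentric[of "(1/2)^n" "3*(1/2)^n" x] by auto
      then show "z \<in> mball s (\<rho> m)" using x(1) unfolding A_def by blast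
    qed
    then show "D m n s \<subseteq> mball s ((1/2)^m)" for m n s by (simp add: \<rho>_def)
    show "s = t" if y1: "y \<in> D m n s" and y2: "y \<in> D m n t" for m n s t y
    proof -
      obtain x where x: "x \<in> A m n s" "y \<in> mball x ((1/2)^n)" using y1 unfolding D_def by blast
      obtain x' where x': "x' \<in> A m n t" "y \<in> mball x' ((1/2)^n)" using y2 unfolding D_def by blast
      have M: "x \<in> M" "x' \<in> M" "y \<in> M" using x x' by auto
      have "d x x' \<le> d x y + d y x'" using M triangle by blast
      also have "\<dots> < 3 * (1/2)^n"
      proof -
        have "d x y < (1/2)^n" "d y x' < (1/2)^n" using x x' commute[of x' y] by auto
        moreover have "(0::real) < (1/2)^n" by simp
        ultimately show ?thesis by linarith
      qed
      finally have dxx: "d x x' < 3 * (1/2)^n" "d x' x < 3 * (1/2)^n" using commute by auto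
      have "x' \<in> mball s (\<rho> m)" using x(1) dxx M unfolding A_def by auto
      then have sin: "s \<in> Sx m x'" unfolding Sx_def by auto
      have "x \<in> mball t (\<rho> m)" using x'(1) dxx M unfolding A_def by auto
      then have tin: "t \<in> Sx m x" unfolding Sx_def by auto
      have "(t, s) \<in> r" using idx[OF M(2), of m] sin x'(1) unfolding A_def by auto
      moreover have "(s, t) \<in> r" using idx[OF M(1), of m] tin x(1) unfolding A_def by auto
      ultimately show "s = t" using r unfolding antisym_def by blast
    qed
    show "\<exists>n s. y \<in> A m n s" if y: "y \<in> M" for m y
    proof -
      let ?s = "idx m y"
      have s: "?s \<in> M" "d ?s y < \<rho> m" using idx[OF y, of m] unfolding Sx_def by auto
      obtain n where n: "(1/2::real)^n < (\<rho> m - d ?s y) / 3"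
        using real_arch_pow_inv[of "(\<rho> m - d ?s y) / 3" "1/2"] s by auto
      have "mball y (3 * (1/2)^n) \<subseteq> mball ?s (\<rho> m)"
      proof
        fix z assume "z \<in> mball y (3 * (1/2)^n)"
        then have z: "z \<in> M" "d y z < 3 * (1/2)^n" by auto
        have "d ?s z \<le> d ?s y + d y z" using triangle s(1) y z(1) by blast
        then show "z \<in> mball ?s (\<rho> m)" using z n s by auto
      qed
      then have "y \<in> A m n ?s" unfolding A_def using y by auto
      then show ?thesis by blast
    qed
  qed
qed

lemma (in Metric_space) bumps:
  assumes "\<And>m n s. openin mtopology (D m n s)" "\<And>m n s. mtopology closure_of (A m n s) \<subseteq> D m n s"
    and AM: "\<And>m n s. A m n s \<subseteq> M"
  obtains h :: "nat \<Rightarrow> nat \<Rightarrow> 'a \<Rightarrow> 'a \<Rightarrow> real" where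
    "\<And>m n s. continuous_map mtopology euclideanreal (h m n s)"
    "\<And>m n s y. y \<in> M \<Longrightarrow> 0 \<le> h m n s y \<and> h m n s y \<le> 1"
    "\<And>m n s y. y \<in> A m n s \<Longrightarrow> h m n s y = 1"
    "\<And>m n s y. y \<in> M \<Longrightarrow> y \<notin> D m n s \<Longrightarrow> h m n s y = 0"
proof -
  have "\<exists>f. continuous_map mtopology euclideanreal f \<and> (\<forall>y\<in>M. 0 \<le> f y \<and> f y \<le> 1)
          \<and> (\<forall>y\<in>A m n s. f y = 1) \<and> (\<forall>y\<in>M. y \<notin> D m n s \<longrightarrow> f y = 0)" for m n s
  proof -
    have c1: "closedin mtopology (M - D m n s)"
      using assms(1) by (metis closedin_diff closedin_topspace topspace_mtopology)
    have c2: "closedin mtopology (mtopology closure_of (A m n s))" by simp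
    have dj: "disjnt (M - D m n s) (mtopology closure_of (A m n s))"
      using assms(2) by (auto simp: disjnt_def)
    obtain f where f: "continuous_map mtopology (top_of_set {0..1}) f"
      "f ` (M - D m n s) \<subseteq> {0}" "f ` (mtopology closure_of (A m n s)) \<subseteq> {1::real}"
      using Urysohn_lemma[OF normal_space_mtopology c1 c2 dj, of 0 1] by auto
    have "A m n s \<subseteq> mtopology closure_of (A m n s)"
      using AM by (simp add: closure_of_subset)
    then have f1: "\<forall>y\<in>A m n s. f y = 1" using f(3) by blast
    have f0: "\<forall>y\<in>M. y \<notin> D m n s \<longrightarrow> f y = 0" using f(2) by blast
    have fc: "continuous_map mtopology euclideanreal f" and fr: "\<forall>y\<in>M. 0 \<le> f y \<and> f y \<le> 1"
      using f(1) by (auto simp: continuous_map_in_subtopology Pi_iff)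
    show ?thesis using f1 f0 fc fr by blast
  qed
  then obtain h where "\<forall>m n s. continuous_map mtopology euclideanreal (h m n s) \<and> (\<forall>y\<in>M. 0 \<le> h m n s y \<and> h m n s y \<le> 1)
          \<and> (\<forall>y\<in>A m n s. h m n s y = 1) \<and> (\<forall>y\<in>M. y \<notin> D m n s \<longrightarrow> h m n s y = 0)"
    by (metis (no_types))
  then show thesis using that by blast
qed




lemma embed_crit:
  fixes \<phi> :: "'a \<Rightarrow> 'i \<Rightarrow> real"
  assumes cont: "continuous_map X PT \<phi>" and t1: "t1_space X"
    and sep: "\<And>U y. openin X U \<Longrightarrow> y \<in> U \<Longrightarrow> \<exists>i. \<phi> y i > 0 \<and> (\<forall>z\<in>topspace X. \<phi> z i > 0 \<longrightarrow> z \<in> U)"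
  shows "embedding_map X PT \<phi>"
proof -
  let ?Y = "subtopology PT (\<phi> ` topspace X)"
  have inj: "inj_on \<phi> (topspace X)"
  proof
    fix y z assume y: "y \<in> topspace X" and z: "z \<in> topspace X" and eq: "\<phi> y = \<phi> z"
    show "y = z"
    proof (rule ccontr)
      assume "y \<noteq> z"
      have "closedin X {z}" using t1 z by (simp add: t1_space_closedin_singleton)
      hence "openin X (topspace X - {z})" by (simp add: closedin_def)
      then obtain i where "\<phi> y i > 0" "\<forall>w\<in>topspace X. \<phi> w i > 0 \<longrightarrow> w \<in> topspace X - {z}"
        using sep[of "topspace X - {z}" y] y \<open>y \<noteq> z\<close> by blast
      thus False using eq z by auto
    qed
  qed
  have om: "open_map X ?Y \<phi>"
    unfolding open_map_def
  proof (intro allI impI)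
    fix U assume U: "openin X U"
    have "\<forall>y\<in>U. \<exists>i. \<phi> y i > 0 \<and> (\<forall>z\<in>topspace X. \<phi> z i > 0 \<longrightarrow> z \<in> U)"
      using sep U by blast
    then obtain ii where ii: "\<And>y. y \<in> U \<Longrightarrow> \<phi> y (ii y) > 0 \<and> (\<forall>z\<in>topspace X. \<phi> z (ii y) > 0 \<longrightarrow> z \<in> U)"
      by metis
    define W where "W = (\<Union>y\<in>U. {p::'i\<Rightarrow>real. p (ii y) > 0})"
    have "openin PT {p::'i\<Rightarrow>real. p (ii y) > 0}" for y
    proof -
      have "openin PT {p \<in> topspace PT. p (ii y) \<in> {0<..}}"
        by (rule openin_continuous_map_preimage[OF continuous_map_product_projection]) auto
      thus ?thesis by simp
    qed
    hence oW: "openin PT W" unfolding W_def by (intro openin_Union) auto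
    have "\<phi> ` U = W \<inter> \<phi> ` topspace X"
    proof
      show "\<phi> ` U \<subseteq> W \<inter> \<phi> ` topspace X"
        using ii openin_subset[OF U] unfolding W_def by fastforce
      show "W \<inter> \<phi> ` topspace X \<subseteq> \<phi> ` U"
        using ii unfolding W_def by fastforce
    qed
    thus "openin ?Y (\<phi> ` U)" using openin_subtopology_Int[OF oW] by simp
  qed
  have "continuous_map X ?Y \<phi>"
    using cont by (auto simp: continuous_map_in_subtopology)
  hence "embedding_map X ?Y \<phi>" using injective_open_imp_embedding_map om inj by blast
  thus ?thesis using embedding_map_in_subtopology by blast
qed

lemma geom_half: "(\<Sum>k<N. (1/2::real)^(k+1)) = 1 - (1/2)^N"
  by (induction N) (auto simp: field_simps)

lemma sum_bound:
  fixes a :: "'i \<Rightarrow> real" and \<kappa> :: "'i \<Rightarrow> nat"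
  assumes "finite F" "\<And>i. i \<in> F \<Longrightarrow> 0 \<le> a i \<and> a i \<le> (1/2)^(\<kappa> i + 1)"
    and inj: "inj_on \<kappa> {i \<in> F. a i \<noteq> 0}"
  shows "(\<Sum>i\<in>F. (a i)\<^sup>2) \<le> 1"
proof -
  let ?F = "{i \<in> F. a i \<noteq> 0}"
  have "(\<Sum>i\<in>F. (a i)\<^sup>2) = (\<Sum>i\<in>?F. (a i)\<^sup>2)"
    using assms(1) by (intro sum.mono_neutral_right) auto
  also have "\<dots> \<le> (\<Sum>i\<in>?F. (1/2::real)^(\<kappa> i + 1))"
  proof (rule sum_mono)
    fix i assume "i \<in> ?F"
    hence "0 \<le> a i" "a i \<le> (1/2)^(\<kappa> i + 1)" using assms(2) by auto
    moreover have "(1/2::real)^(\<kappa> i + 1) \<le> 1" by (intro power_le_one) auto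
    ultimately have "a i * a i \<le> a i * 1" by (intro mult_left_mono) auto
    with \<open>a i \<le> _\<close> show "(a i)\<^sup>2 \<le> (1/2)^(\<kappa> i + 1)" by (simp add: power2_eq_square)
  qed
  also have "\<dots> = (\<Sum>k\<in>\<kappa> ` ?F. (1/2::real)^(k + 1))"
    by (subst sum.reindex[OF inj]) (simp add: o_def)
  also have "\<dots> \<le> (\<Sum>k<Suc (Max (\<kappa> ` ?F)). (1/2::real)^(k + 1))"
  proof (rule sum_mono2)
    show "\<kappa> ` ?F \<subseteq> {..<Suc (Max (\<kappa> ` ?F))}"
      using assms(1) by (auto simp: less_Suc_eq_le)
  qed auto
  also have "\<dots> = 1 - (1/2)^(Suc (Max (\<kappa> ` ?F)))" by (rule geom_half)
  also have "\<dots> \<le> 1" by simp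
  finally show ?thesis .
qed

lemma transfer_top:
  assumes "inj_on \<psi> (topspace T)"
  shows "\<exists>K. homeomorphic_map T K \<psi>"
proof -
  define \<psi>' where "\<psi>' = inv_into (topspace T) \<psi>"
  define K where "K = pullback_topology (\<psi> ` topspace T) \<psi>' T"
  have inv1: "\<And>x. x \<in> topspace T \<Longrightarrow> \<psi>' (\<psi> x) = x"
    unfolding \<psi>'_def using assms by (simp add: inv_into_f_f)
  have tK: "topspace K = \<psi> ` topspace T"
    unfolding K_def topspace_pullback_topology using inv1 by auto
  have "homeomorphic_maps T K \<psi> \<psi>'"
    unfolding homeomorphic_maps_def
  proof (intro conjI)
    have "continuous_map T T (\<psi>' \<circ> \<psi>)"
      by (rule continuous_map_eq[OF continuous_map_id]) (simp add: inv1)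
    thus "continuous_map T K \<psi>" unfolding K_def
      by (rule continuous_map_pullback') auto
    have "continuous_map K T (id \<circ> \<psi>')" unfolding K_def
      by (rule continuous_map_pullback) simp
    thus "continuous_map K T \<psi>'" by simp
    show "\<forall>x\<in>topspace T. \<psi>' (\<psi> x) = x" using inv1 by blast
    show "\<forall>y\<in>topspace K. \<psi> (\<psi>' y) = y" using tK inv1 by auto
  qed
  thus ?thesis using homeomorphic_map_maps by blast
qed

lemma real_seq_encode: "\<exists>ENC :: (nat \<Rightarrow> real) \<Rightarrow> real. inj ENC"
proof -
  obtain f :: "nat set \<Rightarrow> real" where f: "bij_betw f UNIV UNIV"
    using nat_sets_eqpoll_reals unfolding eqpoll_def by blast
  define g where "g = inv f"
  have ginj: "inj g" unfolding g_def using f by (simp add: bij_betw_def inj_on_inv_into surj_imp_inj_inv)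
  have finj: "inj f" using f by (simp add: bij_betw_def)
  define ENC where "ENC u = f {prod_encode (k, j) | k j. j \<in> g (u k)}" for u :: "nat \<Rightarrow> real"
  have "inj ENC"
  proof
    fix u v assume "ENC u = ENC v"
    hence eq: "{prod_encode (k, j) | k j. j \<in> g (u k)} = {prod_encode (k, j) | k j. j \<in> g (v k)}"
      using finj unfolding ENC_def inj_def by blast
    have "g (u k) = g (v k)" for k
    proof -
      have "j \<in> g (u k) \<longleftrightarrow> prod_encode (k, j) \<in> {prod_encode (k, j) | k j. j \<in> g (u k)}" for u j
        using inj_prod_encode[of UNIV] unfolding inj_on_def by blast
      thus ?thesis using eq by blast
    qed
    thus "u = v" using ginj unfolding inj_def by blast
  qed
  thus ?thesis by blast
qed




theorem theorem1:
  fixes X :: "'a topology"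
  assumes "metrizable_space X"
  shows "\<exists>(K :: ('a \<Rightarrow> real) topology) e.
           uniform_eberlein K \<and> Hausdorff_space K \<and>
           embedding_map X K e \<and> K closure_of (e ` topspace X) = topspace K"
proof -
  obtain M d where Md: "Metric_space M d" "X = Metric_space.mtopology M d"
    using assms unfolding metrizable_space_def by blast
  interpret Metric_space M d by (rule Md(1))
  obtain D A :: "nat \<Rightarrow> nat \<Rightarrow> 'a \<Rightarrow> 'a set" where
    AD1: "\<And>m n s. openin mtopology (D m n s)" and
    AD2: "\<And>m n s. A m n s \<subseteq> D m n s" and
    AD3: "\<And>m n s. mtopology closure_of (A m n s) \<subseteq> D m n s" and
    AD4: "\<And>m n s t y. y \<in> D m n s \<Longrightarrow> y \<in> D m n t \<Longrightarrow> s = t" and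
    AD5: "\<And>m n s. D m n s \<subseteq> mball s ((1/2)^m)" and
    AD6: "\<And>m y. y \<in> M \<Longrightarrow> \<exists>n s. y \<in> A m n s"
    by (rule rudin, rule that)
  have AM: "A m n s \<subseteq> M" for m n s using AD2[of m n s] AD5[of m n s] mball_subset_mspace[of s "(1/2)^m"] by blast
  obtain h :: "nat \<Rightarrow> nat \<Rightarrow> 'a \<Rightarrow> 'a \<Rightarrow> real" where
    h1: "\<And>m n s. continuous_map mtopology euclideanreal (h m n s)" and
    h2: "\<And>m n s y. y \<in> M \<Longrightarrow> 0 \<le> h m n s y \<and> h m n s y \<le> 1" and
    h3: "\<And>m n s y. y \<in> A m n s \<Longrightarrow> h m n s y = 1" and
    h4: "\<And>m n s y. y \<in> M \<Longrightarrow> y \<notin> D m n s \<Longrightarrow> h m n s y = 0"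
    by (rule bumps[OF AD1 AD3 AM], rule that)
  define gam :: "nat \<Rightarrow> 'a \<Rightarrow> ('a \<Rightarrow> real)" where "gam k s = (\<lambda>z. if z = s then real k + 1 else 0)" for k s
  have gam_inj: "gam k s = gam k' s' \<Longrightarrow> k = k' \<and> s = s'" for k s k' s'
  proof -
    assume "gam k s = gam k' s'"
    hence "gam k s s = gam k' s' s" by simp
    hence "real k + 1 = (if s = s' then real k' + 1 else 0)" by (simp add: gam_def)
    thus ?thesis by (auto split: if_splits)
  qed
  define G where "G = (\<lambda>(k, s). gam k s)"
  have injG: "inj G" unfolding G_def inj_def using gam_inj by auto
  define \<Gamma> where "\<Gamma> = range G"
  define ks where "ks = inv G"
  have ks: "ks (gam k s) = (k, s)" for k s
    unfolding ks_def using injG by (metis G_def case_prod_conv inv_f_f)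
  define H where "H k s y = h (fst (prod_decode k)) (snd (prod_decode k)) s y" for k s y
  define c :: "nat \<Rightarrow> real" where "c k = (1/2)^(k+1)" for k
  define \<phi> where "\<phi> y i = (if i \<in> \<Gamma> then c (fst (ks i)) * H (fst (ks i)) (snd (ks i)) y else 0)" for y i
  have gamG: "gam k s \<in> \<Gamma>" for k s unfolding \<Gamma>_def G_def by auto
  have \<phi>gam: "\<phi> y (gam k s) = c k * H k s y" for y k s
    unfolding \<phi>_def using gamG ks by simp
  have \<Gamma>E: "i \<in> \<Gamma> \<Longrightarrow> \<exists>k s. i = gam k s" for i unfolding \<Gamma>_def G_def by auto
  have Hr: "y \<in> M \<Longrightarrow> 0 \<le> H k s y \<and> H k s y \<le> 1" for y k s unfolding H_def using h2 by blast
  have \<phi>Bal: "\<phi> y \<in> Bal \<Gamma>" if y: "y \<in> M" for y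
    unfolding Bal_def
  proof (intro CollectI conjI allI impI)
    show "\<phi> y i = 0" if "i \<notin> \<Gamma>" for i using that by (simp add: \<phi>_def)
    fix F assume F: "finite F \<and> F \<subseteq> \<Gamma>"
    show "(\<Sum>i\<in>F. (\<phi> y i)\<^sup>2) \<le> 1"
    proof (rule sum_bound[where \<kappa>="\<lambda>i. fst (ks i)"])
      show "finite F" using F by blast
      fix i assume "i \<in> F"
      then obtain k s where i: "i = gam k s" using F \<Gamma>E by blast
      show "0 \<le> \<phi> y i \<and> \<phi> y i \<le> (1/2)^(fst (ks i) + 1)"
        using Hr[OF y, of k s] unfolding i \<phi>gam ks c_def
        by (auto intro: mult_left_le)
    next
      show "inj_on (\<lambda>i. fst (ks i)) {i \<in> F. \<phi> y i \<noteq> 0}"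
      proof
        fix i j assume i: "i \<in> {i \<in> F. \<phi> y i \<noteq> 0}" and j: "j \<in> {i \<in> F. \<phi> y i \<noteq> 0}"
          and eq: "fst (ks i) = fst (ks j)"
        obtain k s where ik: "i = gam k s" using i F \<Gamma>E by blast
        obtain k' s' where jk: "j = gam k' s'" using j F \<Gamma>E by blast
        have kk: "k = k'" using eq ik jk ks by simp
        have "H k s y \<noteq> 0" "H k s' y \<noteq> 0" using i j ik jk kk \<phi>gam by auto
        hence "y \<in> D (fst (prod_decode k)) (snd (prod_decode k)) s"
              "y \<in> D (fst (prod_decode k)) (snd (prod_decode k)) s'"
          using h4 y unfolding H_def by blast+
        hence "s = s'" using AD4 by blast
        thus "i = j" using ik jk kk by simp
      qed
    qed
  qed
  have \<phi>cont: "continuous_map X PT \<phi>"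
    unfolding continuous_map_componentwise_UNIV
  proof
    fix i
    show "continuous_map X euclideanreal (\<lambda>y. \<phi> y i)"
    proof (cases "i \<in> \<Gamma>")
      case True
      then obtain k s where i: "i = gam k s" using \<Gamma>E by blast
      have "continuous_map X euclideanreal (\<lambda>y. c k * H k s y)"
        unfolding H_def Md(2) by (intro continuous_map_real_mult continuous_map_const[THEN iffD2] h1) auto
      thus ?thesis unfolding i \<phi>gam .
    next
      case False
      thus ?thesis by (simp add: \<phi>_def)
    qed
  qed
  have \<phi>sep: "\<exists>i. \<phi> y i > 0 \<and> (\<forall>z\<in>topspace X. \<phi> z i > 0 \<longrightarrow> z \<in> U)"
    if U: "openin X U" and yU: "y \<in> U" for U y
  proof -
    obtain r where r: "r > 0" "mball y r \<subseteq> U" using U yU unfolding Md(2) openin_mtopology by blast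
    have y: "y \<in> M" using U yU openin_subset Md(2) by fastforce
    obtain m where m: "(1/2::real)^m < r / 2" using real_arch_pow_inv[of "r/2" "1/2"] r by auto
    obtain n s where yA: "y \<in> A m n s" using AD6[OF y] by blast
    define k where "k = prod_encode (m, n)"
    have Hk: "H k s = h m n s" unfolding H_def k_def by simp
    have "\<phi> y (gam k s) > 0" unfolding \<phi>gam Hk using h3[OF yA] by (simp add: c_def)
    moreover have "z \<in> U" if z: "z \<in> topspace X" "\<phi> z (gam k s) > 0" for z
    proof -
      have zM: "z \<in> M" using z Md(2) by simp
      have "h m n s z \<noteq> 0" using z(2) unfolding \<phi>gam Hk by auto
      hence "z \<in> D m n s" using h4 zM by blast
      hence zs: "d s z < (1/2)^m" using AD5 by fastforce
      have ys: "d s y < (1/2)^m" using AD5 AD2 yA by fastforce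
      have sM: "s \<in> M" using AD5 AD2 yA by fastforce
      have "d y z \<le> d y s + d s z" using triangle y sM zM by blast
      also have "\<dots> < r" using zs ys m commute[of y s] by linarith
      finally have "z \<in> mball y r" using y zM by simp
      thus "z \<in> U" using r by blast
    qed
    ultimately show ?thesis by blast
  qed
  have t1: "t1_space X" using assms metrizable_imp_t1_space by blast
  have emb: "embedding_map X PT \<phi>" by (rule embed_crit[OF \<phi>cont t1 \<phi>sep])
  define C where "C = PT closure_of (\<phi> ` M)"
  have \<phi>M: "\<phi> ` M \<subseteq> Bal \<Gamma>" using \<phi>Bal by blast
  have CB: "C \<subseteq> Bal \<Gamma>" unfolding C_def by (rule closure_of_minimal[OF \<phi>M Bal_closed])
  have Ccomp: "compactin PT C"
    by (rule closed_compactin[OF Bal_compact CB]) (simp add: C_def)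
  define T0 where "T0 = subtopology PT C"
  have T0w: "subtopology (weak_l2 \<Gamma>) C = T0" unfolding T0_def by (rule weak_eq_PT[OF CB])
  have CL: "C \<subseteq> l2 \<Gamma>" using CB Bal_l2 by blast
  have T0comp: "compact_space T0" using Ccomp unfolding T0_def compactin_subspace by blast
  have wcomp: "compactin (weak_l2 \<Gamma>) C"
    unfolding compactin_subspace using CL T0comp T0w by (simp add: topspace_weak)
  have T0H: "Hausdorff_space T0" unfolding T0_def by (rule Hausdorff_space_subtopology[OF Hausdorff_PT])
  have tT0: "topspace T0 = C" unfolding T0_def by simp
  have \<phi>MC: "\<phi> ` M \<subseteq> C" unfolding C_def by (rule closure_of_subset) simp
  have embT0: "embedding_map X T0 \<phi>"
    unfolding T0_def embedding_map_in_subtopology using emb \<phi>MC Md(2) by simp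
  have clT0: "T0 closure_of (\<phi> ` M) = C"
    unfolding T0_def closure_of_subtopology using \<phi>MC by (simp add: C_def Int_absorb2 Int_absorb1 closure_of_subset_topspace)
  obtain ENC :: "(nat \<Rightarrow> real) \<Rightarrow> real" where ENC: "inj ENC" using real_seq_encode by blast
  define \<psi> where "\<psi> p = (\<lambda>s. ENC (\<lambda>k. p (gam k s)))" for p :: "('a \<Rightarrow> real) \<Rightarrow> real"
  have "inj_on \<psi> (topspace T0)"
  proof
    fix p q assume p: "p \<in> topspace T0" and q: "q \<in> topspace T0" and eq: "\<psi> p = \<psi> q"
    have "p (gam k s) = q (gam k s)" for k s
    proof -
      have "ENC (\<lambda>k. p (gam k s)) = ENC (\<lambda>k. q (gam k s))" using eq unfolding \<psi>_def by meson
      hence "(\<lambda>k. p (gam k s)) = (\<lambda>k. q (gam k s))" using ENC unfolding inj_def by blast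
      thus ?thesis by meson
    qed
    moreover have "p i = 0" "q i = 0" if "i \<notin> \<Gamma>" for i
      using p q tT0 CB that unfolding Bal_def by auto
    ultimately show "p = q" using \<Gamma>E by (metis ext)
  qed
  then obtain K where hK: "homeomorphic_map T0 K \<psi>" using transfer_top by blast
  have KT0: "K homeomorphic_space T0"
    using homeomorphic_map_imp_homeomorphic_space[OF hK] homeomorphic_space_sym by blast
  have Kcomp: "compact_space K" using homeomorphic_compact_space[OF KT0] T0comp by simp
  have KH: "Hausdorff_space K" using homeomorphic_Hausdorff_space[OF KT0] T0H by simp
  have ue: "uniform_eberlein K"
    unfolding uniform_eberlein_def using Kcomp CL wcomp KT0 T0w by metis
  have embK: "embedding_map X K (\<psi> \<circ> \<phi>)"
    by (rule embedding_map_compose[OF embT0]) (use hK surjective_embedding_map in blast)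
  have "K closure_of ((\<psi> \<circ> \<phi>) ` topspace X) = \<psi> ` (T0 closure_of (\<phi> ` M))"
    using homeomorphic_map_closure_of[OF hK, of "\<phi> ` M"] \<phi>MC tT0 Md(2) by (simp add: image_comp)
  also have "\<dots> = topspace K"
    using clT0 hK tT0 homeomorphic_imp_surjective_map by blast
  finally show ?thesis using ue KH embK by blast
qed


end
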